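(* Let $P=(Q,I,M,\Delta)$ be a broadcast protocol, let $F\subseteq Q$, and let $S$ be the set of states returned by the saturation algorithm on input $P$. If $F\cap S\neq\emptyset$, then there exists a reconfigurable execution $\rho$ covering $F$ such that $\rho$ has at most $2|Q|$ nodes and length at most $2|Q|^2$.
   Context: A broadcast protocol is a tuple $P=(Q,I,M,\Delta)$ where $Q$ is a finite set of states, $I\subseteq Q$ is the set of initial states, $M$ is a finite message alphabet and $\Delta\subseteq Q\times\{!!m,\ ??m \mid m\in M\}\times Q$ is the transition relation ($!!m$ = broadcast of $m$, $??m$ = reception of $m$). Protocols are assumed complete for receptions: for every $q\in Q$ and $m\in M$ there is $q'$ with $(q,??m,q')\in\Delta$. A configuration is a finite undirected graph $\gamma=(V,E,L)$ with $E\subseteq V\times V$ symmetric and irreflexive and $L:V\to Q$; $L(\gamma)$ denotes the set $L(V)$ of labels occurring in $\gamma$; $\gamma$ is initial if $L(V)\subseteq I$. For $v\in V$, its neighbours are the $v'$ with $(v,v')\in E$. A reconfigurable step goes from $\gamma=(V,E,L)$ to $\gamma'=(V,E',L')$ (same node set, arbitrary new edge set $E'$) if there exist a node $v$ and a message $m$ with $(L(v),!!m,L'(v))\in\Delta$ and, for every $v'\neq v$: if $v'$ is a neighbour of $v$ in $E$ then $(L(v'),??m,L'(v'))\in\Delta$, otherwise $L'(v')=L(v')$; $v$ is then said to broadcast in this step. A reconfigurable execution is a sequence $\gamma_0,\dots,\gamma_r$ of configurations over a fixed node set with $\gamma_0$ initial and each $\gamma_i\to\gamma_{i+1}$ a reconfigurable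 step; its number of nodes is $|V|$, its length is $r$, and it covers $F$ if $L(\gamma_r)\cap F\neq\emptyset$. The saturation algorithm on input $P$: start with $S:=I$, $c:=|I|$; repeat: if there is $(q_1,!!m,q_2)\in\Delta$ with $q_1\in S$, $q_2\notin S$, add $q_2$ to $S$ and set $c:=c+1$; else if there are $(q_1,!!m,q_2)\in\Delta$ and $(q_1',??m,q_2')\in\Delta$ with $q_1,q_2,q_1'\in S$ and $q_2'\notin S$, add $q_2'$ to $S$ and set $c:=c+2$; else stop and return $S$ (choices among candidates are arbitrary). *)

theory Defs
  imports Main
begin

datatype 'm action = Bcast 'm | Recv 'm

fun msg_of :: "'m action \<Rightarrow> 'm" where
  "msg_of (Bcast m) = m" | "msg_of (Recv m) = m"

definition broadcast_protocol ::
  "'q set \<Rightarrow> 'q set \<Rightarrow> 'm set \<Rightarrow> ('q \<times> 'm action \<times> 'q) set \<Rightarrow> bool" where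
  "broadcast_protocol Q I M \<Delta> \<longleftrightarrow>
     finite Q \<and> I \<subseteq> Q \<and> finite M \<and>
     (\<forall>(q, a, q') \<in> \<Delta>. q \<in> Q \<and> q' \<in> Q \<and> msg_of a \<in> M) \<and>
     (\<forall>q\<in>Q. \<forall>m\<in>M. \<exists>q'. (q, Recv m, q') \<in> \<Delta>)"

inductive sat_step :: "('q \<times> 'm action \<times> 'q) set \<Rightarrow> ('q set \<times> nat) \<Rightarrow> ('q set \<times> nat) \<Rightarrow> bool"
  for \<Delta> where
  bcast: "\<lbrakk>(q1, Bcast m, q2) \<in> \<Delta>; q1 \<in> S; q2 \<notin> S\<rbrakk>
          \<Longrightarrow> sat_step \<Delta> (S, c) (insert q2 S, c + 1)"
| recv: "\<lbrakk>\<not> (\<exists>q1 m q2. (q1, Bcast m, q2) \<in> \<Delta> \<and> q1 \<in> S \<and> q2 \<notin> S);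
          (q1, Bcast m, q2) \<in> \<Delta>; (q1', Recv m, q2') \<in> \<Delta>;
          q1 \<in> S; q2 \<in> S; q1' \<in> S; q2' \<notin> S\<rbrakk>
          \<Longrightarrow> sat_step \<Delta> (S, c) (insert q2' S, c + 2)"

definition saturation_result :: "'q set \<Rightarrow> ('q \<times> 'm action \<times> 'q) set \<Rightarrow> 'q set \<Rightarrow> bool" where
  "saturation_result I \<Delta> S \<longleftrightarrow>
     (\<exists>c. (sat_step \<Delta>)\<^sup>*\<^sup>* (I, card I) (S, c) \<and> (\<nexists>st. sat_step \<Delta> (S, c) st))"

type_synonym 'q config = "(nat \<times> nat) set \<times> (nat \<Rightarrow> 'q)"

definition config_wf :: "nat set \<Rightarrow> 'q config \<Rightarrow> bool" where
  "config_wf V \<gamma> \<longleftrightarrow> (let E = fst \<gamma> in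
      E \<subseteq> V \<times> V \<and> (\<forall>v v'. (v, v') \<in> E \<longrightarrow> (v', v) \<in> E) \<and> (\<forall>v. (v, v) \<notin> E))"

definition labels :: "nat set \<Rightarrow> 'q config \<Rightarrow> 'q set" where
  "labels V \<gamma> = snd \<gamma> ` V"

definition initial_config :: "'q set \<Rightarrow> nat set \<Rightarrow> 'q config \<Rightarrow> bool" where
  "initial_config I V \<gamma> \<longleftrightarrow> labels V \<gamma> \<subseteq> I"

definition reconf_step ::
  "('q \<times> 'm action \<times> 'q) set \<Rightarrow> nat set \<Rightarrow> 'q config \<Rightarrow> 'q config \<Rightarrow> bool" where
  "reconf_step \<Delta> V \<gamma> \<gamma>' \<longleftrightarrow>
     (let E = fst \<gamma>; L = snd \<gamma>; L' = snd \<gamma>' in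
       \<exists>v\<in>V. \<exists>m. (L v, Bcast m, L' v) \<in> \<Delta> \<and>
         (\<forall>v'\<in>V. v' \<noteq> v \<longrightarrow>
            ((v, v') \<in> E \<longrightarrow> (L v', Recv m, L' v') \<in> \<Delta>) \<and>
            ((v, v') \<notin> E \<longrightarrow> L' v' = L v')))"

text \<open>A reconfigurable execution gamma_0, ..., gamma_r as a nonempty list over the
  fixed finite node set V; its length is r = length - 1.\<close>
definition reconf_execution ::
  "'q set \<Rightarrow> ('q \<times> 'm action \<times> 'q) set \<Rightarrow> nat set \<Rightarrow> 'q config list \<Rightarrow> bool" where
  "reconf_execution I \<Delta> V \<rho> \<longleftrightarrow>
     finite V \<and> \<rho> \<noteq> [] \<and> (\<forall>\<gamma>\<in>set \<rho>. config_wf V \<gamma>) \<and>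
     initial_config I V (\<rho> ! 0) \<and>
     (\<forall>i. Suc i < length \<rho> \<longrightarrow> reconf_step \<Delta> V (\<rho> ! i) (\<rho> ! Suc i))"

definition exec_length :: "'q config list \<Rightarrow> nat" where
  "exec_length \<rho> = length \<rho> - 1"

definition covers :: "nat set \<Rightarrow> 'q config list \<Rightarrow> 'q set \<Rightarrow> bool" where
  "covers V \<rho> F \<longleftrightarrow> labels V (last \<rho>) \<inter> F \<noteq> {}"

end

theory Submission
  imports Defs
begin

definition ewf :: "nat set \<Rightarrow> (nat \<times> nat) set \<Rightarrow> bool" where
  "ewf W E \<longleftrightarrow> E \<subseteq> W \<times> W \<and> (\<forall>v v'. (v, v') \<in> E \<longrightarrow> (v', v) \<in> E) \<and> (\<forall>v. (v, v) \<notin> E)"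

definition ostep :: "('q \<times> 'm action \<times> 'q) set \<Rightarrow> nat set \<Rightarrow> (nat \<times> nat) set \<Rightarrow> (nat \<Rightarrow> 'q) \<Rightarrow> (nat \<Rightarrow> 'q) \<Rightarrow> bool" where
  "ostep \<Delta> W E L L' \<longleftrightarrow> (\<exists>v\<in>W. \<exists>m. (L v, Bcast m, L' v) \<in> \<Delta> \<and>
         (\<forall>v'\<in>W. v' \<noteq> v \<longrightarrow>
            ((v, v') \<in> E \<longrightarrow> (L v', Recv m, L' v') \<in> \<Delta>) \<and>
            ((v, v') \<notin> E \<longrightarrow> L' v' = L v')))"

definition reachn :: "('q \<times> 'm action \<times> 'q) set \<Rightarrow> nat set \<Rightarrow> (nat \<Rightarrow> 'q) \<Rightarrow> (nat \<Rightarrow> 'q) \<Rightarrow> nat \<Rightarrow> bool" where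
  "reachn \<Delta> W L L' n \<longleftrightarrow> (\<exists>Ls Es. Ls 0 = L \<and> Ls n = L' \<and> (\<forall>i. ewf W (Es i)) \<and>
      (\<forall>i<n. ostep \<Delta> W (Es i) (Ls i) (Ls (Suc i))))"

lemma ewf_empty: "ewf W {}" by (simp add: ewf_def)

lemma reachn_refl: "reachn \<Delta> W L L 0"
  unfolding reachn_def by (rule exI[of _ "\<lambda>_. L"], rule exI[of _ "\<lambda>_. {}"], simp add: ewf_empty)

lemma reachn_one: "ewf W E \<Longrightarrow> ostep \<Delta> W E L L' \<Longrightarrow> reachn \<Delta> W L L' 1"
  unfolding reachn_def
  by (rule exI[of _ "\<lambda>i. if i = 0 then L else L'"], rule exI[of _ "\<lambda>_. E"], simp)

lemma reachn_trans:
  assumes "reachn \<Delta> W L L1 n" "reachn \<Delta> W L1 L2 k"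
  shows "reachn \<Delta> W L L2 (n + k)"
proof -
  obtain Ls Es where A: "Ls 0 = L" "Ls n = L1" "\<forall>i. ewf W (Es i)"
    "\<forall>i<n. ostep \<Delta> W (Es i) (Ls i) (Ls (Suc i))"
    using assms(1) unfolding reachn_def by blast
  obtain Ls2 Es2 where B: "Ls2 0 = L1" "Ls2 k = L2" "\<forall>i. ewf W (Es2 i)"
    "\<forall>i<k. ostep \<Delta> W (Es2 i) (Ls2 i) (Ls2 (Suc i))"
    using assms(2) unfolding reachn_def by blast
  define Ls' where "Ls' i = (if i \<le> n then Ls i else Ls2 (i - n))" for i
  define Es' where "Es' i = (if i < n then Es i else Es2 (i - n))" for i
  have "\<forall>i<n+k. ostep \<Delta> W (Es' i) (Ls' i) (Ls' (Suc i))"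
  proof (intro allI impI)
    fix i assume i: "i < n + k"
    show "ostep \<Delta> W (Es' i) (Ls' i) (Ls' (Suc i))"
    proof (cases "i < n")
      case True then show ?thesis using A(4) by (simp add: Ls'_def Es'_def)
    next
      case False
      then have "i - n < k" "Suc i - n = Suc (i - n)" using i by auto
      moreover have "Ls' i = Ls2 (i - n)" using False A(2) B(1) by (auto simp: Ls'_def)
      ultimately show ?thesis using B(4) False by (simp add: Ls'_def Es'_def)
    qed
  qed
  moreover have "Ls' 0 = L" "Ls' (n + k) = L2" using A B by (auto simp: Ls'_def)
  moreover have "\<forall>i. ewf W (Es' i)" using A(3) B(3) by (simp add: Es'_def)
  ultimately show ?thesis unfolding reachn_def by blast
qed

lemma bcast_phase:
  assumes "finite X" "X \<subseteq> W" "(q1, Bcast m, q2) \<in> \<Delta>" "\<forall>v\<in>X. L v = q1"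
  shows "reachn \<Delta> W L (\<lambda>v. if v \<in> X then q2 else L v) (card X)"
  using assms
proof (induction X rule: finite_induct)
  case empty
  then show ?case using reachn_refl by simp
next
  case (insert x X)
  have IH: "reachn \<Delta> W L (\<lambda>v. if v \<in> X then q2 else L v) (card X)"
    using insert by auto
  have "ostep \<Delta> W {} (\<lambda>v. if v \<in> X then q2 else L v) (\<lambda>v. if v \<in> insert x X then q2 else L v)"
    unfolding ostep_def
    using insert by (intro bexI[of _ x]) auto
  then have "reachn \<Delta> W (\<lambda>v. if v \<in> X then q2 else L v) (\<lambda>v. if v \<in> insert x X then q2 else L v) 1"
    using reachn_one ewf_empty by blast
  from reachn_trans[OF IH this] show ?case using insert by simp
qed

lemma recv_step:
  assumes "h \<in> W" "X \<subseteq> W" "h \<notin> X" "(q1, Bcast m, q2) \<in> \<Delta>" "(q1', Recv m, q2') \<in> \<Delta>"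
    "L h = q1" "\<forall>v\<in>X. L v = q1'"
  shows "reachn \<Delta> W L (\<lambda>v. if v \<in> X then q2' else if v = h then q2 else L v) 1"
proof -
  define E where "E = {(h, x) | x. x \<in> X} \<union> {(x, h) | x. x \<in> X}"
  have "ewf W E" unfolding ewf_def E_def using assms(1-3) by auto
  moreover have "ostep \<Delta> W E L (\<lambda>v. if v \<in> X then q2' else if v = h then q2 else L v)"
    unfolding ostep_def E_def using assms by (intro bexI[of _ h]) auto
  ultimately show ?thesis using reachn_one by blast
qed

lemma to_exec:
  assumes "reachn \<Delta> W L0 L1 n" "finite W" "L0 ` W \<subseteq> I"
  shows "\<exists>\<rho>. reconf_execution I \<Delta> W \<rho> \<and> snd (last \<rho>) = L1 \<and> exec_length \<rho> = n"
proof -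
  obtain Ls Es where A: "Ls 0 = L0" "Ls n = L1" "\<forall>i. ewf W (Es i)"
    "\<forall>i<n. ostep \<Delta> W (Es i) (Ls i) (Ls (Suc i))"
    using assms(1) unfolding reachn_def by blast
  define \<rho> where "\<rho> = map (\<lambda>i. (Es i, Ls i)) [0..<Suc n]"
  have "reconf_execution I \<Delta> W \<rho>"
    unfolding reconf_execution_def
  proof (intro conjI allI impI ballI)
    show "finite W" by fact
    show "\<rho> \<noteq> []" by (simp add: \<rho>_def)
    fix \<gamma> assume "\<gamma> \<in> set \<rho>"
    then obtain i where "\<gamma> = (Es i, Ls i)" by (auto simp: \<rho>_def)
    then show "config_wf W \<gamma>" using A(3) unfolding config_wf_def ewf_def Let_def by simp
  next
    show "initial_config I W (\<rho> ! 0)"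
      using assms(3) A(1) by (simp add: \<rho>_def initial_config_def labels_def del: upt_Suc)
  next
    fix i assume "Suc i < length \<rho>"
    then have "i < n" by (simp add: \<rho>_def)
    then show "reconf_step \<Delta> W (\<rho> ! i) (\<rho> ! Suc i)"
      using A(4) by (simp add: \<rho>_def reconf_step_def ostep_def del: upt_Suc)
  qed
  moreover have "snd (last \<rho>) = L1" using A(2) by (simp add: \<rho>_def last_map del: upt_Suc)
  moreover have "exec_length \<rho> = n" by (simp add: \<rho>_def exec_length_def)
  ultimately show ?thesis by blast
qed

lemma inv:
  assumes "(sat_step \<Delta>)\<^sup>*\<^sup>* (I, card I) (S, c)" "finite Q" "I \<subseteq> Q"
    "\<forall>(q, a, q') \<in> \<Delta>. q \<in> Q \<and> q' \<in> Q"
  shows "S \<subseteq> Q \<and> I \<subseteq> S \<and> c + card I \<le> 2 * card S \<and> (S \<noteq> {} \<longrightarrow> I \<noteq> {})"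
  using assms(1)
proof (induction rule: rtranclp_induct2)
  case refl
  then show ?case using assms(3) by simp
next
  case (step S c S' c')
  have fS: "finite S" using step(3) assms(2) finite_subset by blast
  from step(2) show ?case
  proof cases
    case (bcast q1 m q2)
    have "q2 \<in> Q" using assms(4) bcast(3) by blast
    moreover have "card S' = Suc (card S)" using bcast fS by simp
    ultimately show ?thesis using step(3) bcast by auto
  next
    case (recv q1 m q2 q1' q2')
    have "q2' \<in> Q" using assms(4) recv(5) by blast
    moreover have "card S' = Suc (card S)" using recv fS by simp
    ultimately show ?thesis using step(3) recv by auto
  qed
qed

lemma main:
  assumes "(sat_step \<Delta>)\<^sup>*\<^sup>* (I, card I) (S, c)" "finite Q" "I \<subseteq> Q"
    "\<forall>(q, a, q') \<in> \<Delta>. q \<in> Q \<and> q' \<in> Q"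
  shows "\<forall>V t. finite V \<longrightarrow> t ` V \<subseteq> S \<longrightarrow>
    (\<exists>W L0 L1 n. finite W \<and> V \<subseteq> W \<and> L0 ` W \<subseteq> I \<and> reachn \<Delta> W L0 L1 n \<and>
       (\<forall>v\<in>V. L1 v = t v) \<and> card W + card I \<le> card V + c \<and> n \<le> (card S - card I) * card W)"
  using assms(1)
proof (induction rule: rtranclp_induct2)
  case refl
  show ?case
  proof (intro allI impI)
    fix V and t :: "nat \<Rightarrow> 'a"
    assume "finite V" "t ` V \<subseteq> I"
    then show "\<exists>W L0 L1 n. finite W \<and> V \<subseteq> W \<and> L0 ` W \<subseteq> I \<and> reachn \<Delta> W L0 L1 n \<and>
       (\<forall>v\<in>V. L1 v = t v) \<and> card W + card I \<le> card V + card I \<and> n \<le> (card I - card I) * card W"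
      by (intro exI[of _ V] exI[of _ t] exI[of _ t] exI[of _ 0]) (simp add: reachn_refl)
  qed
next
  case (step S c S' c')
  have iv: "S \<subseteq> Q \<and> I \<subseteq> S \<and> c + card I \<le> 2 * card S \<and> (S \<noteq> {} \<longrightarrow> I \<noteq> {})"
    using inv[OF step(1) assms(2-4)] .
  have fS: "finite S" using iv assms(2) finite_subset by blast
  have cI: "card I \<le> card S" using iv fS card_mono by blast
  from step(2) show ?case
  proof cases
    case (bcast q1 m q2)
    show ?thesis
    proof (intro allI impI)
      fix V and t :: "nat \<Rightarrow> 'a"
      assume fV: "finite V" and tV: "t ` V \<subseteq> S'"
      define t' where "t' v = (if t v = q2 then q1 else t v)" for v
      have tS: "t' ` V \<subseteq> S" using tV bcast by (auto simp: t'_def)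
      obtain W L0 L1 n where H: "finite W" "V \<subseteq> W" "L0 ` W \<subseteq> I" "reachn \<Delta> W L0 L1 n"
        "\<forall>v\<in>V. L1 v = t' v" "card W + card I \<le> card V + c" "n \<le> (card S - card I) * card W"
        using step(3)[rule_format, OF fV tS] by blast
      define X where "X = {v \<in> V. t v = q2}"
      have fX: "finite X" "X \<subseteq> W" using fV H(2) by (auto simp: X_def)
      have LX: "\<forall>v\<in>X. L1 v = q1" using H(5) by (auto simp: X_def t'_def)
      have B: "reachn \<Delta> W L1 (\<lambda>v. if v \<in> X then q2 else L1 v) (card X)"
        by (rule bcast_phase[OF fX bcast(3) LX])
      have R: "reachn \<Delta> W L0 (\<lambda>v. if v \<in> X then q2 else L1 v) (n + card X)"
        by (rule reachn_trans[OF H(4) B])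
      have cX: "card X \<le> card W" using fX H(1) card_mono by blast
      have Len: "n + card X \<le> (card S' - card I) * card W"
      proof -
        have "card S' = Suc (card S)" using bcast fS by simp
        then have "(card S' - card I) * card W = (card S - card I) * card W + card W"
          using cI by (simp add: Suc_diff_le)
        then show ?thesis using H(7) cX by linarith
      qed
      have Lab: "\<forall>v\<in>V. (if v \<in> X then q2 else L1 v) = t v"
        using H(5) by (auto simp: X_def t'_def)
      have Card: "card W + card I \<le> card V + c'" using H(6) bcast(2) by linarith
      have H1: "finite W" "V \<subseteq> W" "L0 ` W \<subseteq> I" using H(1-3) by auto
      show "\<exists>W L0 L1 n. finite W \<and> V \<subseteq> W \<and> L0 ` W \<subseteq> I \<and> reachn \<Delta> W L0 L1 n \<and>
         (\<forall>v\<in>V. L1 v = t v) \<and> card W + card I \<le> card V + c' \<and> n \<le> (card S' - card I) * card W"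
        by (rule exI[of _ W], rule exI[of _ L0], rule exI[of _ "\<lambda>v. if v \<in> X then q2 else L1 v"],
            rule exI[of _ "n + card X"]) (intro conjI; fact)
    qed
  next
    case (recv q1 m q2 q1' q2')
    show ?thesis
    proof (intro allI impI)
      fix V and t :: "nat \<Rightarrow> 'a"
      assume fV: "finite V" and tV: "t ` V \<subseteq> S'"
      obtain h :: nat where hV: "h \<notin> V" using ex_new_if_finite[OF infinite_UNIV_nat fV] by blast
      define t' where "t' v = (if v = h then q1 else if t v = q2' then q1' else t v)" for v
      have tS: "t' ` insert h V \<subseteq> S" using tV recv by (auto simp: t'_def)
      obtain W L0 L1 n where H: "finite W" "insert h V \<subseteq> W" "L0 ` W \<subseteq> I" "reachn \<Delta> W L0 L1 n"
        "\<forall>v\<in>insert h V. L1 v = t' v" "card W + card I \<le> card (insert h V) + c"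
        "n \<le> (card S - card I) * card W"
        using step(3)[rule_format, OF finite_insert[THEN iffD2, OF fV] tS] by blast
      define X where "X = {v \<in> V. t v = q2'}"
      have X: "h \<in> W" "X \<subseteq> W" "h \<notin> X" using H(2) hV by (auto simp: X_def)
      have LX: "L1 h = q1" "\<forall>v\<in>X. L1 v = q1'" using H(5) hV by (auto simp: X_def t'_def)
      have B: "reachn \<Delta> W L1 (\<lambda>v. if v \<in> X then q2' else if v = h then q2 else L1 v) 1"
        by (rule recv_step[OF X recv(4) recv(5) LX])
      have R: "reachn \<Delta> W L0 (\<lambda>v. if v \<in> X then q2' else if v = h then q2 else L1 v) (n + 1)"
        by (rule reachn_trans[OF H(4) B])
      have cW: "1 \<le> card W" using X(1) H(1) by (metis One_nat_def Suc_leI card_gt_0_iff empty_iff)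
      have Len: "n + 1 \<le> (card S' - card I) * card W"
      proof -
        have "card S' = Suc (card S)" using recv fS by simp
        then have "(card S' - card I) * card W = (card S - card I) * card W + card W"
          using cI by (simp add: Suc_diff_le)
        then show ?thesis using H(7) cW by linarith
      qed
      have Lab: "\<forall>v\<in>V. (if v \<in> X then q2' else if v = h then q2 else L1 v) = t v"
        using H(5) hV by (auto simp: X_def t'_def)
      have Card: "card W + card I \<le> card V + c'"
      proof -
        have "card (insert h V) = Suc (card V)" using hV fV by simp
        then show ?thesis using H(6) recv(2) by linarith
      qed
      have H1: "finite W" "V \<subseteq> W" "L0 ` W \<subseteq> I" using H(1-3) by auto
      show "\<exists>W L0 L1 n. finite W \<and> V \<subseteq> W \<and> L0 ` W \<subseteq> I \<and> reachn \<Delta> W L0 L1 n \<and>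
         (\<forall>v\<in>V. L1 v = t v) \<and> card W + card I \<le> card V + c' \<and> n \<le> (card S' - card I) * card W"
        by (rule exI[of _ W], rule exI[of _ L0], rule exI[of _ "\<lambda>v. if v \<in> X then q2' else if v = h then q2 else L1 v"],
            rule exI[of _ "n + 1"]) (intro conjI; fact)
    qed
  qed
qed

theorem theorem3p2:
  fixes Q I :: "'q set" and M :: "'m set" and \<Delta> :: "('q \<times> 'm action \<times> 'q) set"
    and F S :: "'q set"
  assumes "broadcast_protocol Q I M \<Delta>"
    and "F \<subseteq> Q"
    and "saturation_result I \<Delta> S"
    and "F \<inter> S \<noteq> {}"
  shows "\<exists>V \<rho>. reconf_execution I \<Delta> V \<rho> \<and> covers V \<rho> F \<and>
           card V \<le> 2 * card Q \<and> (exec_length \<rho>) \<le> 2 * (card Q)^2"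
proof -
  have P: "finite Q" "I \<subseteq> Q" "\<forall>(q, a, q') \<in> \<Delta>. q \<in> Q \<and> q' \<in> Q"
    using assms(1) unfolding broadcast_protocol_def by auto
  obtain c where run: "(sat_step \<Delta>)\<^sup>*\<^sup>* (I, card I) (S, c)"
    using assms(3) unfolding saturation_result_def by blast
  obtain f where f: "f \<in> F" "f \<in> S" using assms(4) by blast
  have iv: "S \<subseteq> Q \<and> I \<subseteq> S \<and> c + card I \<le> 2 * card S \<and> (S \<noteq> {} \<longrightarrow> I \<noteq> {})"
    using inv[OF run P] .
  have fS: "finite S" using iv P(1) finite_subset by blast
  have cS: "card S \<le> card Q" using iv P(1) card_mono by blast
  have I1: "1 \<le> card I" using iv f(2) P(1,2) finite_subset
    by (metis One_nat_def Suc_leI card_gt_0_iff empty_iff)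
  obtain W L0 L1 n where H: "finite W" "{0} \<subseteq> W" "L0 ` W \<subseteq> I" "reachn \<Delta> W L0 L1 n"
    "\<forall>v\<in>{0::nat}. L1 v = f" "card W + card I \<le> card {0::nat} + c" "n \<le> (card S - card I) * card W"
    using main[OF run P, rule_format, of "{0}" "\<lambda>_. f"] f(2) by blast
  obtain \<rho> where E: "reconf_execution I \<Delta> W \<rho>" "snd (last \<rho>) = L1" "exec_length \<rho> = n"
    using to_exec[OF H(4) H(1) H(3)] by blast
  have cov: "covers W \<rho> F" using E(2) H(2,5) f(1) by (auto simp: covers_def labels_def)
  have cW: "card W \<le> 2 * card Q" using H(6) iv I1 cS by simp
  have "n \<le> card Q * (2 * card Q)"
    using H(7) cW cS by (meson diff_le_self le_trans mult_le_mono)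
  then have "n \<le> 2 * (card Q)^2" by (simp add: power2_eq_square)
  then show ?thesis using E cov cW by blast
qed

end
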